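(* Let $(M,F)$ be a $P$-reducible Finsler space of dimension $n$, i.e. $P_{ijk}=\frac1{n+1}(h_{ij}P_k+h_{jk}P_i+h_{ki}P_j)$ with $P_i=P^r_{ir}$, admitting a semi-concurrent vector field $B^i(x)$. If $B^2F^2-B_0^2\neq0$, where $B^2=g_{ij}B^iB^j$ and $B_0=g_{ij}B^iy^j$, then $P_k=0$ and $(M,F)$ is a Landsberg space.
   Context: $(M,F)$ is a Finsler manifold with metric $g_{ij}=\frac12\dot\partial_i\dot\partial_jF^2$, $l_i=\dot\partial_iF$, angular metric $h_{ij}=g_{ij}-l_il_j$, Cartan tensor $C_{ijk}=\frac12\dot\partial_kg_{ij}$. $P_{ijk}$ is the ($hv$-)torsion tensor (Landsberg tensor) $P_{ijk}=C_{ijk|0}$ of the Cartan connection, with $P^r_{ir}=g^{rs}P_{sir}$. A Landsberg space is one with $P_{ijk}\equiv0$. A vector field $B^i(x)$ on $M$ is semi-concurrent if $B^hC_{hij}=0$. *)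

theory Defs
  imports "HOL-Analysis.Analysis"
begin

text \<open>A point of the slit tangent bundle over a
coordinate domain U is a pair z = (x, y) with x in U and y nonzero.
Indices range over the finite type 'n, and the dimension is n = CARD('n).\<close>

definition dirderiv :: "'a::real_normed_vector \<Rightarrow> ('a \<Rightarrow> real) \<Rightarrow> 'a \<Rightarrow> real" where
  "dirderiv v f z = deriv (\<lambda>t. f (z + t *\<^sub>R v)) 0"

definition smooth_on :: "'a::real_normed_vector set \<Rightarrow> ('a \<Rightarrow> real) \<Rightarrow> bool" where
  "smooth_on D f \<longleftrightarrow>
     (\<forall>vs. continuous_on D (foldr dirderiv vs f) \<and>
        (\<forall>v. \<forall>z\<in>D. ((\<lambda>t. foldr dirderiv vs f (z + t *\<^sub>R v))
                    has_real_derivative dirderiv v (foldr dirderiv vs f) z) (at 0)))"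

definition dX :: "'n::finite \<Rightarrow> ((real^'n) \<times> (real^'n) \<Rightarrow> real) \<Rightarrow> (real^'n) \<times> (real^'n) \<Rightarrow> real" where
  "dX i f = dirderiv (axis i 1, 0) f"

definition dY :: "'n::finite \<Rightarrow> ((real^'n) \<times> (real^'n) \<Rightarrow> real) \<Rightarrow> (real^'n) \<times> (real^'n) \<Rightarrow> real" where
  "dY i f = dirderiv (0, axis i 1) f"

definition TU0 :: "(real^'n::finite) set \<Rightarrow> ((real^'n) \<times> (real^'n)) set" where
  "TU0 U = U \<times> (UNIV - {0})"

type_synonym 'n fn = "(real^'n) \<times> (real^'n) \<Rightarrow> real"

definition Fsq :: "'n::finite fn \<Rightarrow> 'n fn" where
  "Fsq F = (\<lambda>z. (F z)\<^sup>2)"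

definition gt :: "'n::finite fn \<Rightarrow> 'n \<Rightarrow> 'n \<Rightarrow> 'n fn" where
  "gt F i j z = dY i (dY j (Fsq F)) z / 2"

definition lt :: "'n::finite fn \<Rightarrow> 'n \<Rightarrow> 'n fn" where
  "lt F i = dY i F"

definition ht :: "'n::finite fn \<Rightarrow> 'n \<Rightarrow> 'n \<Rightarrow> 'n fn" where
  "ht F i j z = gt F i j z - lt F i z * lt F j z"

definition Ct :: "'n::finite fn \<Rightarrow> 'n \<Rightarrow> 'n \<Rightarrow> 'n \<Rightarrow> 'n fn" where
  "Ct F i j k z = dY k (gt F i j) z / 2"

definition ginv :: "'n::finite fn \<Rightarrow> 'n \<Rightarrow> 'n \<Rightarrow> 'n fn" where
  "ginv F i j z = matrix_inv (\<chi> a b. gt F a b z) $ i $ j"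

definition Gs :: "'n::finite fn \<Rightarrow> 'n \<Rightarrow> 'n fn" where
  "Gs F i z = (\<Sum>l\<in>UNIV. ginv F i l z *
      ((\<Sum>k\<in>UNIV. snd z $ k * dY l (dX k (Fsq F)) z) - dX l (Fsq F) z)) / 4"

definition Nt :: "'n::finite fn \<Rightarrow> 'n \<Rightarrow> 'n \<Rightarrow> 'n fn" where
  "Nt F i j = dY j (Gs F i)"

definition delta :: "'n::finite fn \<Rightarrow> 'n \<Rightarrow> 'n fn \<Rightarrow> 'n fn" where
  "delta F j f z = dX j f z - (\<Sum>r\<in>UNIV. Nt F r j z * dY r f z)"

definition cartanF :: "'n::finite fn \<Rightarrow> 'n \<Rightarrow> 'n \<Rightarrow> 'n \<Rightarrow> 'n fn" where
  "cartanF F i j k z = (\<Sum>r\<in>UNIV. ginv F i r z *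
      (delta F j (gt F r k) z + delta F k (gt F r j) z - delta F r (gt F j k) z)) / 2"

definition Chd :: "'n::finite fn \<Rightarrow> 'n \<Rightarrow> 'n \<Rightarrow> 'n \<Rightarrow> 'n \<Rightarrow> 'n fn" where
  "Chd F i j k l z = delta F l (Ct F i j k) z
     - (\<Sum>r\<in>UNIV. Ct F r j k z * cartanF F r i l z + Ct F i r k z * cartanF F r j l z
                  + Ct F i j r z * cartanF F r k l z)"

definition Pt :: "'n::finite fn \<Rightarrow> 'n \<Rightarrow> 'n \<Rightarrow> 'n \<Rightarrow> 'n fn" where
  "Pt F i j k z = (\<Sum>l\<in>UNIV. snd z $ l * Chd F i j k l z)"

definition Pv :: "'n::finite fn \<Rightarrow> 'n \<Rightarrow> 'n fn" where
  "Pv F i z = (\<Sum>r\<in>UNIV. \<Sum>s\<in>UNIV. ginv F r s z * Pt F s i r z)"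

definition finsler :: "(real^'n::finite) set \<Rightarrow> 'n fn \<Rightarrow> bool" where
  "finsler U F \<longleftrightarrow> open U \<and> smooth_on (TU0 U) F
     \<and> (\<forall>z\<in>TU0 U. F z > 0)
     \<and> (\<forall>x\<in>U. \<forall>y. \<forall>c::real. y \<noteq> 0 \<longrightarrow> c > 0 \<longrightarrow> F (x, c *\<^sub>R y) = c * F (x, y))
     \<and> (\<forall>z\<in>TU0 U. \<forall>v::real^'n. v \<noteq> 0 \<longrightarrow>
           (\<Sum>i\<in>UNIV. \<Sum>j\<in>UNIV. gt F i j z * v $ i * v $ j) > 0)"

definition P_reducible :: "(real^'n::finite) set \<Rightarrow> 'n fn \<Rightarrow> bool" where
  "P_reducible U F \<longleftrightarrow> (\<forall>z\<in>TU0 U. \<forall>i j k.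
     Pt F i j k z = (ht F i j z * Pv F k z + ht F j k z * Pv F i z + ht F k i z * Pv F j z)
                    / (real CARD('n) + 1))"

definition semi_concurrent :: "(real^'n::finite) set \<Rightarrow> 'n fn \<Rightarrow> (real^'n \<Rightarrow> real^'n) \<Rightarrow> bool" where
  "semi_concurrent U F B \<longleftrightarrow> (\<forall>i. smooth_on U (\<lambda>x. B x $ i))
     \<and> (\<forall>z\<in>TU0 U. \<forall>i j. (\<Sum>h\<in>UNIV. B (fst z) $ h * Ct F h i j z) = 0)"

definition Bsq :: "'n::finite fn \<Rightarrow> (real^'n \<Rightarrow> real^'n) \<Rightarrow> 'n fn" where
  "Bsq F B z = (\<Sum>i\<in>UNIV. \<Sum>j\<in>UNIV. gt F i j z * B (fst z) $ i * B (fst z) $ j)"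

definition B0 :: "'n::finite fn \<Rightarrow> (real^'n \<Rightarrow> real^'n) \<Rightarrow> 'n fn" where
  "B0 F B z = (\<Sum>i\<in>UNIV. \<Sum>j\<in>UNIV. gt F i j z * B (fst z) $ i * snd z $ j)"

end

theory Submission
  imports Defs
begin

lemma line_open:
  fixes D :: "'a::real_normed_vector set"
  assumes "open D"
  shows "open {t::real. z + t *\<^sub>R v \<in> D}"
proof -
  have "continuous_on UNIV (\<lambda>t::real. z + t *\<^sub>R v)" by (intro continuous_intros)
  then have "open ((\<lambda>t::real. z + t *\<^sub>R v) -` D)"
    using assms by (simp add: open_vimage)
  then show ?thesis by (simp add: vimage_def)
qed

lemma line_ev:
  fixes D :: "'a::real_normed_vector set"
  assumes "open D" "z \<in> D"
  shows "eventually (\<lambda>t::real. z + t *\<^sub>R v \<in> D) (nhds 0)"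
  using eventually_nhds_in_open[OF line_open[OF assms(1), of z v]] assms(2) by simp

lemma dirderiv_cong:
  fixes D :: "'a::real_normed_vector set"
  assumes "open D" "z \<in> D" "\<And>w. w \<in> D \<Longrightarrow> f w = g w"
  shows "dirderiv v f z = dirderiv v g z"
  unfolding dirderiv_def
  by (rule deriv_cong_ev[OF eventually_mono[OF line_ev[OF assms(1,2), of v]]]) (auto simp: assms(3))

lemma smooth_foldr_deriv:
  assumes "smooth_on D f" "z \<in> D"
  shows "((\<lambda>t. foldr dirderiv vs f (z + t *\<^sub>R v)) has_real_derivative
           dirderiv v (foldr dirderiv vs f) z) (at 0)"
proof -
  have "\<forall>v. \<forall>z\<in>D. ((\<lambda>t. foldr dirderiv vs f (z + t *\<^sub>R v)) has_real_derivative
           dirderiv v (foldr dirderiv vs f) z) (at 0)"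
    using spec[OF assms(1)[unfolded smooth_on_def], of vs] by (rule conjunct2)
  then show ?thesis using assms(2) by simp
qed

lemma smooth_foldr_cont:
  assumes "smooth_on D f"
  shows "continuous_on D (foldr dirderiv vs f)"
  using spec[OF assms(1)[unfolded smooth_on_def], of vs] by (rule conjunct1)

lemma smooth_derivD:
  assumes "smooth_on D f" "z \<in> D"
  shows "((\<lambda>t. f (z + t *\<^sub>R v)) has_real_derivative dirderiv v f z) (at 0)"
  using smooth_foldr_deriv[OF assms, of "[]"] by simp

lemma smooth_contD:
  assumes "smooth_on D f"
  shows "continuous_on D f"
  using smooth_foldr_cont[OF assms, of "[]"] by simp

lemma smooth_dir:
  assumes "smooth_on D f"
  shows "smooth_on D (dirderiv v f)"
  unfolding smooth_on_def
proof (intro allI conjI ballI)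
  fix vs
  have e: "foldr dirderiv vs (dirderiv v f) = foldr dirderiv (vs @ [v]) f" by simp
  show "continuous_on D (foldr dirderiv vs (dirderiv v f))"
    unfolding e by (rule smooth_foldr_cont[OF assms])
  fix u z assume "z \<in> D"
  then show "((\<lambda>t. foldr dirderiv vs (dirderiv v f) (z + t *\<^sub>R u)) has_real_derivative
           dirderiv u (foldr dirderiv vs (dirderiv v f)) z) (at 0)"
    unfolding e by (rule smooth_foldr_deriv[OF assms])
qed

lemma line_deriv:
  assumes "smooth_on D f" "p + b *\<^sub>R v \<in> D"
  shows "((\<lambda>s. f (p + s *\<^sub>R v)) has_real_derivative dirderiv v f (p + b *\<^sub>R v)) (at b)"
proof -
  have "((\<lambda>t. f (p + b *\<^sub>R v + t *\<^sub>R v)) has_real_derivative dirderiv v f (p + b *\<^sub>R v)) (at 0)"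
    by (rule smooth_derivD[OF assms])
  moreover have "(\<lambda>t. f (p + b *\<^sub>R v + t *\<^sub>R v)) = (\<lambda>t. (\<lambda>s. f (p + s *\<^sub>R v)) (t + b))"
    by (auto simp: algebra_simps)
  ultimately show ?thesis using DERIV_shift[of "\<lambda>s. f (p + s *\<^sub>R v)" _ 0 b] by simp
qed

lemma dirderiv_const: "dirderiv v (\<lambda>_. k) z = 0"
  unfolding dirderiv_def by (rule DERIV_imp_deriv) (rule DERIV_const)
lemma foldr_const: "foldr dirderiv vs (\<lambda>_. c) = (\<lambda>_. if vs = [] then c else 0)"
proof (induction vs)
  case Nil then show ?case by simp
next
  case (Cons v vs)
  show ?case apply (rule ext) apply (simp only: foldr_Cons o_apply Cons.IH) 
   apply (simp only: dirderiv_const) by simp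
qed
lemma smooth_const: "smooth_on D (\<lambda>_. c)"
  unfolding smooth_on_def
proof (intro allI conjI ballI)
  fix vs show "continuous_on D (foldr dirderiv vs (\<lambda>_. c))" unfolding foldr_const by (rule continuous_on_const)
  fix v z
  show "((\<lambda>t. foldr dirderiv vs (\<lambda>_. c) (z + t *\<^sub>R v)) has_real_derivative dirderiv v (foldr dirderiv vs (\<lambda>_. c)) z) (at 0)"
    unfolding foldr_const dirderiv_const by (rule DERIV_const)
qed

definition Sfg :: "('a::real_normed_vector \<Rightarrow> real) \<Rightarrow> ('a \<Rightarrow> real) \<Rightarrow> ('a list \<times> 'a list) list \<Rightarrow> 'a \<Rightarrow> real" where
  "Sfg f g L z = sum_list (map (\<lambda>(a,b). foldr dirderiv a f z * foldr dirderiv b g z) L)"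

definition Lp :: "'a \<Rightarrow> ('a list \<times> 'a list) list \<Rightarrow> ('a list \<times> 'a list) list" where
  "Lp v L = concat (map (\<lambda>(a,b). [(v#a,b),(a,v#b)]) L)"

lemma Sfg_deriv:
  assumes "smooth_on D f" "smooth_on D g" "z \<in> D"
  shows "((\<lambda>t. Sfg f g L (z + t *\<^sub>R v)) has_real_derivative Sfg f g (Lp v L) z) (at 0)"
proof (induction L)
  case Nil then show ?case by (simp add: Sfg_def Lp_def)
next
  case (Cons p L)
  obtain a b where p: "p = (a,b)" by force
  have da: "((\<lambda>t. foldr dirderiv a f (z + t *\<^sub>R v)) has_real_derivative foldr dirderiv (v#a) f z) (at 0)"
    using smooth_foldr_deriv[OF assms(1,3), of a v] by simp
  have db: "((\<lambda>t. foldr dirderiv b g (z + t *\<^sub>R v)) has_real_derivative foldr dirderiv (v#b) g z) (at 0)"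
    using smooth_foldr_deriv[OF assms(2,3), of b v] by simp
  have "((\<lambda>t. foldr dirderiv a f (z + t *\<^sub>R v) * foldr dirderiv b g (z + t *\<^sub>R v) + Sfg f g L (z + t *\<^sub>R v))
     has_real_derivative (foldr dirderiv (v#a) f z * foldr dirderiv b g (z + 0 *\<^sub>R v) +
        foldr dirderiv (v#b) g z * foldr dirderiv a f (z + 0 *\<^sub>R v)) + Sfg f g (Lp v L) z) (at 0)"
    by (intro DERIV_add DERIV_mult da db Cons.IH)
  then show ?case by (simp add: p Sfg_def Lp_def algebra_simps)
qed

lemma Sfg_cont:
  assumes "smooth_on D f" "smooth_on D g"
  shows "continuous_on D (Sfg f g L)"
proof (induction L)
  case Nil then show ?case by (simp add: Sfg_def)
next
  case (Cons p L)
  obtain a b where p: "p = (a,b)" by force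
  have "continuous_on D (\<lambda>z. foldr dirderiv a f z * foldr dirderiv b g z + Sfg f g L z)"
    by (intro continuous_on_add continuous_on_mult smooth_foldr_cont assms Cons.IH)
  then show ?case by (simp add: p Sfg_def)
qed

lemma smooth_mult_foldr:
  fixes D :: "'a::real_normed_vector set"
  assumes "open D" "smooth_on D f" "smooth_on D g"
  shows "\<exists>L. \<forall>z\<in>D. foldr dirderiv vs (\<lambda>z. f z * g z) z = Sfg f g L z"
proof (induction vs)
  case Nil
  have "\<forall>z\<in>D. foldr dirderiv [] (\<lambda>z. f z * g z) z = Sfg f g [([],[])] z"
    by (simp add: Sfg_def)
  then show ?case by blast
next
  case (Cons v vs)
  then obtain L where L: "\<forall>z\<in>D. foldr dirderiv vs (\<lambda>z. f z * g z) z = Sfg f g L z" by blast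
  have "\<forall>z\<in>D. foldr dirderiv (v#vs) (\<lambda>z. f z * g z) z = Sfg f g (Lp v L) z"
  proof
    fix z assume z: "z \<in> D"
    have "((\<lambda>t. foldr dirderiv vs (\<lambda>z. f z * g z) (z + t *\<^sub>R v)) has_real_derivative Sfg f g (Lp v L) z) (at 0)"
    proof (rule has_field_derivative_transform_within_open[OF Sfg_deriv[OF assms(2,3) z] line_open[OF assms(1)]])
      show "0 \<in> {t. z + t *\<^sub>R v \<in> D}" using z by simp
      fix t assume "t \<in> {t. z + t *\<^sub>R v \<in> D}"
      then show "Sfg f g L (z + t *\<^sub>R v) = foldr dirderiv vs (\<lambda>z. f z * g z) (z + t *\<^sub>R v)"
        using L by simp
    qed
    then show "foldr dirderiv (v#vs) (\<lambda>z. f z * g z) z = Sfg f g (Lp v L) z"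
      unfolding foldr_Cons o_apply dirderiv_def by (rule DERIV_imp_deriv)
  qed
  then show ?case by blast
qed

lemma smooth_mult:
  fixes D :: "'a::real_normed_vector set"
  assumes "open D" "smooth_on D f" "smooth_on D g"
  shows "smooth_on D (\<lambda>z. f z * g z)"
  unfolding smooth_on_def
proof (intro allI conjI ballI)
  fix vs
  obtain L where L: "\<forall>z\<in>D. foldr dirderiv vs (\<lambda>z. f z * g z) z = Sfg f g L z"
    using smooth_mult_foldr[OF assms] by blast
  show "continuous_on D (foldr dirderiv vs (\<lambda>z. f z * g z))"
    using Sfg_cont[OF assms(2,3), of L] continuous_on_cong[OF refl, of D "foldr dirderiv vs (\<lambda>z. f z * g z)" "Sfg f g L"] L
    by simp
  fix v z assume z: "z \<in> D"
  obtain L' where L': "\<forall>z\<in>D. foldr dirderiv (v#vs) (\<lambda>z. f z * g z) z = Sfg f g L' z"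
    using smooth_mult_foldr[OF assms] by blast
  have "((\<lambda>t. foldr dirderiv vs (\<lambda>z. f z * g z) (z + t *\<^sub>R v)) has_real_derivative Sfg f g (Lp v L) z) (at 0)"
  proof (rule has_field_derivative_transform_within_open[OF Sfg_deriv[OF assms(2,3) z] line_open[OF assms(1)]])
    show "0 \<in> {t. z + t *\<^sub>R v \<in> D}" using z by simp
    fix t assume "t \<in> {t. z + t *\<^sub>R v \<in> D}"
    then show "Sfg f g L (z + t *\<^sub>R v) = foldr dirderiv vs (\<lambda>z. f z * g z) (z + t *\<^sub>R v)"
      using L by simp
  qed
  moreover then have "dirderiv v (foldr dirderiv vs (\<lambda>z. f z * g z)) z = Sfg f g (Lp v L) z"
    unfolding dirderiv_def by (rule DERIV_imp_deriv)
  ultimately show "((\<lambda>t. foldr dirderiv vs (\<lambda>z. f z * g z) (z + t *\<^sub>R v)) has_real_derivative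
           dirderiv v (foldr dirderiv vs (\<lambda>z. f z * g z)) z) (at 0)" by simp
qed


lemma mvt_any:
  fixes \<phi> \<phi>' :: "real \<Rightarrow> real"
  assumes "\<And>s. \<bar>s\<bar> \<le> \<bar>t\<bar> \<Longrightarrow> (\<phi> has_real_derivative \<phi>' s) (at s)"
  shows "\<exists>s. \<bar>s\<bar> \<le> \<bar>t\<bar> \<and> \<phi> t - \<phi> 0 = t * \<phi>' s"
proof (cases "t = 0")
  case True then show ?thesis by (intro exI[of _ 0]) simp
next
  case False
  show ?thesis
  proof (cases "t > 0")
    case True
    from MVT2[OF True, of \<phi> \<phi>'] assms True obtain s where "0 < s" "s < t" "\<phi> t - \<phi> 0 = (t - 0) * \<phi>' s"
      by auto
    then show ?thesis by (intro exI[of _ s]) auto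
  next
    case f2: False
    with False have tn: "t < 0" by simp
    from MVT2[OF tn, of \<phi> \<phi>'] assms tn obtain s where "t < s" "s < 0" "\<phi> 0 - \<phi> t = (0 - t) * \<phi>' s"
      by auto
    then show ?thesis by (intro exI[of _ s]) (auto simp: algebra_simps)
  qed
qed

lemma cont_eps:
  fixes D :: "'a::real_normed_vector set" and f :: "'a \<Rightarrow> real"
  assumes "open D" "continuous_on D f" "w \<in> D" "e > 0"
  shows "\<exists>d>0. ball w d \<subseteq> D \<and> (\<forall>p. dist p w < d \<longrightarrow> \<bar>f p - f w\<bar> < e)"
proof -
  have "continuous (at w) f" using assms(1,2,3) continuous_on_eq_continuous_at by blast
  then obtain d1 where d1: "d1 > 0" "\<forall>p. dist p w < d1 \<longrightarrow> dist (f p) (f w) < e"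
    using assms(4) unfolding continuous_at_eps_delta by blast
  obtain d2 where d2: "d2 > 0" "ball w d2 \<subseteq> D" using assms(1,3) open_contains_ball by blast
  show ?thesis
    using d1 d2 by (intro exI[of _ "min d1 d2"]) (auto simp: dist_real_def)
qed

lemma norm_two_bound:
  fixes u v :: "'a::real_normed_vector"
  assumes "\<bar>a\<bar> \<le> \<bar>t\<bar>" "\<bar>b\<bar> \<le> \<bar>t\<bar>"
  shows "norm (a *\<^sub>R u + b *\<^sub>R v) \<le> \<bar>t\<bar> * (norm u + norm v)"
proof -
  have "norm (a *\<^sub>R u + b *\<^sub>R v) \<le> \<bar>a\<bar> * norm u + \<bar>b\<bar> * norm v"
    using norm_triangle_ineq[of "a *\<^sub>R u" "b *\<^sub>R v"] by simp
  also have "\<dots> \<le> \<bar>t\<bar> * norm u + \<bar>t\<bar> * norm v"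
    using assms by (intro add_mono mult_right_mono) auto
  finally show ?thesis by (simp add: algebra_simps)
qed

lemma small_t:
  fixes u v w :: "'a::real_normed_vector"
  assumes "\<bar>a\<bar> \<le> \<bar>t\<bar>" "\<bar>b\<bar> \<le> \<bar>t\<bar>" "\<bar>t\<bar> * (norm u + norm v + 1) < d"
  shows "dist (w + a *\<^sub>R u + b *\<^sub>R v) w < d"
proof -
  have "dist (w + a *\<^sub>R u + b *\<^sub>R v) w = norm (a *\<^sub>R u + b *\<^sub>R v)" by (simp add: dist_norm)
  also have "\<dots> \<le> \<bar>t\<bar> * (norm u + norm v)" by (rule norm_two_bound[OF assms(1,2)])
  also have "\<dots> \<le> \<bar>t\<bar> * (norm u + norm v + 1)" by (simp add: mult_left_mono)
  finally show ?thesis using assms(3) by simp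
qed

lemma dirderiv_add:
  fixes D :: "'a::real_normed_vector set"
  assumes "open D" "smooth_on D f" "w \<in> D"
  shows "dirderiv (u + v) f w = dirderiv u f w + dirderiv v f w"
proof -
  let ?g1 = "\<lambda>t. f (w + t *\<^sub>R u + t *\<^sub>R v) - f (w + t *\<^sub>R u)"
  let ?K = "norm u + norm v + 1"
  have Kpos: "?K > 0" by (simp add: add_nonneg_pos)
  have sv: "smooth_on D (dirderiv v f)" by (rule smooth_dir[OF assms(2)])
  have g2: "((\<lambda>t. f (w + t *\<^sub>R u)) has_real_derivative dirderiv u f w) (at 0)"
    by (rule smooth_derivD[OF assms(2,3)])
  have g1: "(?g1 has_real_derivative dirderiv v f w) (at 0)"
    unfolding DERIV_def LIM_eq
  proof (intro allI impI)
    fix e :: real assume e: "e > 0"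
    obtain d where d: "d > 0" "ball w d \<subseteq> D" "\<forall>p. dist p w < d \<longrightarrow> \<bar>dirderiv v f p - dirderiv v f w\<bar> < e"
      using cont_eps[OF assms(1) smooth_contD[OF sv] assms(3) e] by blast
    show "\<exists>s>0. \<forall>h. h \<noteq> 0 \<and> norm (h - 0) < s \<longrightarrow>
             norm ((?g1 (0 + h) - ?g1 0) / h - dirderiv v f w) < e"
    proof (intro exI[of _ "d / ?K"] conjI allI impI)
      show "d / ?K > 0" using d Kpos by simp
      fix h :: real assume h: "h \<noteq> 0 \<and> norm (h - 0) < d / ?K"
      then have hK: "\<bar>h\<bar> * ?K < d" using Kpos by (simp add: field_simps)
      have inD: "w + a *\<^sub>R u + b *\<^sub>R v \<in> D" if "\<bar>a\<bar> \<le> \<bar>h\<bar>" "\<bar>b\<bar> \<le> \<bar>h\<bar>" for a b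
        using small_t[OF that hK, of w] d(2) by (auto simp: dist_commute)
      have "\<exists>s. \<bar>s\<bar> \<le> \<bar>h\<bar> \<and> (\<lambda>s. f (w + h *\<^sub>R u + s *\<^sub>R v)) h - (\<lambda>s. f (w + h *\<^sub>R u + s *\<^sub>R v)) 0
             = h * dirderiv v f (w + h *\<^sub>R u + s *\<^sub>R v)"
        by (rule mvt_any) (rule line_deriv[OF assms(2) inD], auto)
      then obtain s where s: "\<bar>s\<bar> \<le> \<bar>h\<bar>"
        "f (w + h *\<^sub>R u + h *\<^sub>R v) - f (w + h *\<^sub>R u) = h * dirderiv v f (w + h *\<^sub>R u + s *\<^sub>R v)"
        by auto
      have "?g1 (0 + h) - ?g1 0 = h * dirderiv v f (w + h *\<^sub>R u + s *\<^sub>R v)"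
        using s(2) by simp
      then have "(?g1 (0 + h) - ?g1 0) / h = dirderiv v f (w + h *\<^sub>R u + s *\<^sub>R v)"
        using h by simp
      moreover have "dist (w + h *\<^sub>R u + s *\<^sub>R v) w < d"
        by (rule small_t[OF _ s(1) hK]) simp
      ultimately show "norm ((?g1 (0 + h) - ?g1 0) / h - dirderiv v f w) < e"
        using d(3) by simp
    qed
  qed
  have "((\<lambda>t. ?g1 t + f (w + t *\<^sub>R u)) has_real_derivative dirderiv v f w + dirderiv u f w) (at 0)"
    by (rule DERIV_add[OF g1 g2])
  moreover have "(\<lambda>t. ?g1 t + f (w + t *\<^sub>R u)) = (\<lambda>t. f (w + t *\<^sub>R (u + v)))"
    by (rule ext) (simp add: scaleR_add_right add.assoc)
  ultimately have "((\<lambda>t. f (w + t *\<^sub>R (u + v))) has_real_derivative dirderiv v f w + dirderiv u f w) (at 0)"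
    by simp
  then have "dirderiv (u + v) f w = dirderiv v f w + dirderiv u f w"
    unfolding dirderiv_def[of "u+v"] by (rule DERIV_imp_deriv)
  then show ?thesis by linarith
qed

lemma dirderiv_scale:
  assumes "smooth_on D f" "w \<in> D"
  shows "dirderiv (c *\<^sub>R v) f w = c * dirderiv v f w"
proof -
  have d1: "((\<lambda>s. f (w + s *\<^sub>R v)) has_real_derivative dirderiv v f w) (at (c * 0))"
    using smooth_derivD[OF assms] by simp
  have "((\<lambda>t. (\<lambda>s. f (w + s *\<^sub>R v)) (c * t)) has_real_derivative dirderiv v f w * c) (at 0)"
    by (rule DERIV_chain2[OF d1 DERIV_cmult_Id])
  moreover have "(\<lambda>t. (\<lambda>s. f (w + s *\<^sub>R v)) (c * t)) = (\<lambda>t. f (w + t *\<^sub>R (c *\<^sub>R v)))"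
    by (rule ext) (simp add: mult.commute)
  ultimately have "((\<lambda>t. f (w + t *\<^sub>R (c *\<^sub>R v))) has_real_derivative dirderiv v f w * c) (at 0)"
    by simp
  then have "dirderiv (c *\<^sub>R v) f w = dirderiv v f w * c"
    unfolding dirderiv_def[of "c *\<^sub>R v"] by (rule DERIV_imp_deriv)
  then show ?thesis by simp
qed



lemma mixed:
  fixes D :: "'a::real_normed_vector set"
  assumes "smooth_on D f" "\<And>a b. \<bar>a\<bar> \<le> \<bar>t\<bar> \<Longrightarrow> \<bar>b\<bar> \<le> \<bar>t\<bar> \<Longrightarrow> w + a *\<^sub>R u + b *\<^sub>R v \<in> D"
  shows "\<exists>a b. \<bar>a\<bar> \<le> \<bar>t\<bar> \<and> \<bar>b\<bar> \<le> \<bar>t\<bar> \<and>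
    f (w + t *\<^sub>R u + t *\<^sub>R v) - f (w + t *\<^sub>R u) - f (w + t *\<^sub>R v) + f w
      = t * t * dirderiv u (dirderiv v f) (w + a *\<^sub>R u + b *\<^sub>R v)"
proof -
  have in1: "w + t *\<^sub>R u + b *\<^sub>R v \<in> D" if "\<bar>b\<bar> \<le> \<bar>t\<bar>" for b
    using assms(2)[of t b] that by simp
  have in2: "w + b *\<^sub>R v \<in> D" if "\<bar>b\<bar> \<le> \<bar>t\<bar>" for b
    using assms(2)[of 0 b] that by simp
  have in3: "w + b *\<^sub>R v + a *\<^sub>R u \<in> D" if "\<bar>a\<bar> \<le> \<bar>t\<bar>" "\<bar>b\<bar> \<le> \<bar>t\<bar>" for a b
    using assms(2)[of a b] that by (simp add: add_ac)
  have "\<exists>b. \<bar>b\<bar> \<le> \<bar>t\<bar> \<and>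
     (\<lambda>b. f (w + t *\<^sub>R u + b *\<^sub>R v) - f (w + b *\<^sub>R v)) t - (\<lambda>b. f (w + t *\<^sub>R u + b *\<^sub>R v) - f (w + b *\<^sub>R v)) 0
     = t * (dirderiv v f (w + t *\<^sub>R u + b *\<^sub>R v) - dirderiv v f (w + b *\<^sub>R v))"
    by (rule mvt_any, rule DERIV_diff) (rule line_deriv[OF assms(1)], erule in1, rule line_deriv[OF assms(1)], erule in2)
  then obtain b1 where b1: "\<bar>b1\<bar> \<le> \<bar>t\<bar>"
    "f (w + t *\<^sub>R u + t *\<^sub>R v) - f (w + t *\<^sub>R u) - f (w + t *\<^sub>R v) + f w
     = t * (dirderiv v f (w + t *\<^sub>R u + b1 *\<^sub>R v) - dirderiv v f (w + b1 *\<^sub>R v))"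
    by (auto simp: algebra_simps)
  have "\<exists>a. \<bar>a\<bar> \<le> \<bar>t\<bar> \<and>
     (\<lambda>a. dirderiv v f (w + b1 *\<^sub>R v + a *\<^sub>R u)) t - (\<lambda>a. dirderiv v f (w + b1 *\<^sub>R v + a *\<^sub>R u)) 0
     = t * dirderiv u (dirderiv v f) (w + b1 *\<^sub>R v + a *\<^sub>R u)"
    by (rule mvt_any) (rule line_deriv[OF smooth_dir[OF assms(1)]], rule in3[OF _ b1(1)])
  then obtain a1 where a1: "\<bar>a1\<bar> \<le> \<bar>t\<bar>"
    "dirderiv v f (w + b1 *\<^sub>R v + t *\<^sub>R u) - dirderiv v f (w + b1 *\<^sub>R v)
     = t * dirderiv u (dirderiv v f) (w + b1 *\<^sub>R v + a1 *\<^sub>R u)"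
    by auto
  have e1: "w + b1 *\<^sub>R v + t *\<^sub>R u = w + t *\<^sub>R u + b1 *\<^sub>R v" by (simp add: add_ac)
  have e2: "w + b1 *\<^sub>R v + a1 *\<^sub>R u = w + a1 *\<^sub>R u + b1 *\<^sub>R v" by (simp add: add_ac)
  show ?thesis
    using a1 b1 unfolding e1 e2 by (intro exI[of _ a1] exI[of _ b1]) simp
qed

lemma clairaut:
  fixes D :: "'a::real_normed_vector set"
  assumes "open D" "smooth_on D f" "w \<in> D"
  shows "dirderiv u (dirderiv v f) w = dirderiv v (dirderiv u f) w"
proof (rule ccontr)
  let ?A = "dirderiv u (dirderiv v f)" and ?B = "dirderiv v (dirderiv u f)"
  assume ne: "?A w \<noteq> ?B w"
  define e where "e = \<bar>?A w - ?B w\<bar> / 2"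
  have e: "e > 0" using ne by (simp add: e_def)
  obtain d1 where d1: "d1 > 0" "ball w d1 \<subseteq> D" "\<forall>p. dist p w < d1 \<longrightarrow> \<bar>?A p - ?A w\<bar> < e"
    using cont_eps[OF assms(1) smooth_contD[OF smooth_dir[OF smooth_dir[OF assms(2)]]] assms(3) e] by blast
  obtain d2 where d2: "d2 > 0" "\<forall>p. dist p w < d2 \<longrightarrow> \<bar>?B p - ?B w\<bar> < e"
    using cont_eps[OF assms(1) smooth_contD[OF smooth_dir[OF smooth_dir[OF assms(2)]]] assms(3) e] by blast
  define K where "K = norm u + norm v + 1"
  have Kpos: "K > 0" by (simp add: K_def add_nonneg_pos)
  define t where "t = min d1 d2 / (2 * K)"
  have tpos: "t > 0" using d1 d2 Kpos by (simp add: t_def)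
  have "t * K = min d1 d2 / 2" using Kpos by (simp add: t_def)
  moreover have "min d1 d2 > 0" using d1 d2 by simp
  moreover have "\<bar>t\<bar> = t" using tpos by simp
  ultimately have tK: "\<bar>t\<bar> * K < min d1 d2" by linarith
  have m1: "min d1 d2 \<le> d1" "min d1 d2 \<le> d2" by auto
  have tK1: "\<bar>t\<bar> * (norm u + norm v + 1) < d1" "\<bar>t\<bar> * (norm u + norm v + 1) < d2"
    using tK m1 unfolding K_def by linarith+
  have tK2: "\<bar>t\<bar> * (norm v + norm u + 1) < d1" using tK1 by (simp add: add_ac)
  have inD: "w + a *\<^sub>R u + b *\<^sub>R v \<in> D" if "\<bar>a\<bar> \<le> \<bar>t\<bar>" "\<bar>b\<bar> \<le> \<bar>t\<bar>" for a b
    using small_t[OF that tK1(1), of w] d1(2) by (auto simp: dist_commute)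
  have inD': "w + a *\<^sub>R v + b *\<^sub>R u \<in> D" if "\<bar>a\<bar> \<le> \<bar>t\<bar>" "\<bar>b\<bar> \<le> \<bar>t\<bar>" for a b
    using small_t[OF that tK2, of w] d1(2) by (auto simp: dist_commute)
  obtain a1 b1 where ab1: "\<bar>a1\<bar> \<le> \<bar>t\<bar>" "\<bar>b1\<bar> \<le> \<bar>t\<bar>"
    "f (w + t *\<^sub>R u + t *\<^sub>R v) - f (w + t *\<^sub>R u) - f (w + t *\<^sub>R v) + f w
      = t * t * ?A (w + a1 *\<^sub>R u + b1 *\<^sub>R v)"
    using mixed[OF assms(2) inD, of t] by blast
  obtain a2 b2 where ab2: "\<bar>a2\<bar> \<le> \<bar>t\<bar>" "\<bar>b2\<bar> \<le> \<bar>t\<bar>"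
    "f (w + t *\<^sub>R v + t *\<^sub>R u) - f (w + t *\<^sub>R v) - f (w + t *\<^sub>R u) + f w
      = t * t * ?B (w + a2 *\<^sub>R v + b2 *\<^sub>R u)"
    using mixed[OF assms(2) inD', of t] by blast
  have "w + t *\<^sub>R v + t *\<^sub>R u = w + t *\<^sub>R u + t *\<^sub>R v" by (simp add: add_ac)
  then have "f (w + t *\<^sub>R v + t *\<^sub>R u) = f (w + t *\<^sub>R u + t *\<^sub>R v)" by (rule arg_cong)
  then have "(t * t) * ?A (w + a1 *\<^sub>R u + b1 *\<^sub>R v) = (t * t) * ?B (w + a2 *\<^sub>R v + b2 *\<^sub>R u)"
    using ab1(3) ab2(3) by linarith
  moreover have "t * t \<noteq> 0" using tpos by simp
  ultimately have eq: "?A (w + a1 *\<^sub>R u + b1 *\<^sub>R v) = ?B (w + a2 *\<^sub>R v + b2 *\<^sub>R u)"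
    by simp
  have "\<bar>?A (w + a1 *\<^sub>R u + b1 *\<^sub>R v) - ?A w\<bar> < e"
    using d1(3) small_t[OF ab1(1,2) tK1(1)] by blast
  moreover have "\<bar>?B (w + a2 *\<^sub>R v + b2 *\<^sub>R u) - ?B w\<bar> < e"
    using d2(2) small_t[OF ab2(1,2), of v u d2 w] tK1(2) by (simp add: add_ac)
  moreover have "?A w - ?B w = (?A w - ?A (w + a1 *\<^sub>R u + b1 *\<^sub>R v)) + (?B (w + a2 *\<^sub>R v + b2 *\<^sub>R u) - ?B w)"
    using eq by simp
  then have "\<bar>?A w - ?B w\<bar> \<le> \<bar>?A w - ?A (w + a1 *\<^sub>R u + b1 *\<^sub>R v)\<bar> + \<bar>?B (w + a2 *\<^sub>R v + b2 *\<^sub>R u) - ?B w\<bar>"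
    by (metis abs_triangle_ineq)
  ultimately show False unfolding e_def by (simp add: abs_minus_commute)
qed



lemma dirderiv_zero: "dirderiv 0 f w = 0"
  unfolding dirderiv_def by simp

lemma dirderiv_sum:
  fixes D :: "'a::real_normed_vector set"
  assumes "open D" "smooth_on D f" "w \<in> D" "finite S"
  shows "dirderiv (\<Sum>j\<in>S. c j *\<^sub>R u j) f w = (\<Sum>j\<in>S. c j * dirderiv (u j) f w)"
  using assms(4)
proof (induction S rule: finite_induct)
  case empty then show ?case by (simp add: dirderiv_zero)
next
  case (insert j S)
  then show ?case
    by (simp add: dirderiv_add[OF assms(1-3)] dirderiv_scale[OF assms(2,3)])
qed

lemma zero_deriv:
  assumes "(g has_real_derivative d) (at 0)" "open T" "0 \<in> T" "\<And>t. t \<in> T \<Longrightarrow> g t = 0"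
  shows "d = 0"
proof -
  have "((\<lambda>_. 0) has_real_derivative d) (at 0)"
    by (rule has_field_derivative_transform_within_open[OF assms(1-3)]) (simp add: assms(4))
  then show ?thesis using DERIV_const DERIV_unique by blast
qed

lemma eq_deriv:
  fixes D :: "'a::real_normed_vector set"
  assumes "((\<lambda>t. g (z + t *\<^sub>R v)) has_real_derivative d1) (at 0)"
    "((\<lambda>t. h (z + t *\<^sub>R v)) has_real_derivative d2) (at 0)"
    "open D" "z \<in> D" "\<And>w. w \<in> D \<Longrightarrow> g w = h w"
  shows "d1 = d2"
proof -
  have "((\<lambda>t. h (z + t *\<^sub>R v)) has_real_derivative d1) (at 0)"
    by (rule has_field_derivative_transform_within_open[OF assms(1) line_open[OF assms(3)]])
       (use assms(4,5) in auto)
  then show ?thesis using assms(2) DERIV_unique by blast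
qed

lemma smooth_half:
  fixes D :: "'a::real_normed_vector set"
  assumes "open D" "smooth_on D f"
  shows "smooth_on D (\<lambda>w. f w / 2)"
proof -
  have "smooth_on D (\<lambda>w. f w * (\<lambda>_. 1/2) w)"
    by (rule smooth_mult[OF assms smooth_const])
  then show ?thesis by simp
qed

lemma open_TU0: "open U \<Longrightarrow> open (TU0 U)"
  unfolding TU0_def by (intro open_Times open_Diff open_UNIV closed_singleton)

lemma dY_eq: "dY i f = dirderiv (0, axis i 1) f"
  unfolding dY_def ..

lemma dX_eq: "dX i f = dirderiv (axis i 1, 0) f"
  unfolding dX_def ..

lemma pair_expansion: "((0::real^'n::finite), y) = (\<Sum>j\<in>UNIV. (y $ j) *\<^sub>R ((0::real^'n), axis j (1::real)))"
proof -
  have "(\<Sum>j\<in>UNIV. (y $ j) *\<^sub>R ((0::real^'n), axis j (1::real))) = (0, \<Sum>j\<in>UNIV. (y $ j) *\<^sub>R axis j (1::real))"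
    by (simp add: prod_eq_iff fst_sum snd_sum)
  also have "(\<Sum>j\<in>UNIV. (y $ j) *\<^sub>R axis j (1::real)) = y"
    using basis_expansion[of y] by (simp add: scalar_mult_eq_scaleR)
  finally show ?thesis by simp
qed



lemma add_00 [simp]: "(z::('a::monoid_add \<times> 'b::monoid_add)) + (0, 0) = z"
  by (simp add: prod_eq_iff)

lemma swap0:
  fixes b :: "'n::finite \<Rightarrow> real" and X :: "'m::finite \<Rightarrow> 'n \<Rightarrow> real"
  assumes "\<And>r. (\<Sum>j\<in>UNIV. b j * X r j) = 0"
  shows "(\<Sum>j\<in>UNIV. b j * (\<Sum>r\<in>UNIV. X r j * G r)) = 0"
proof -
  have "(\<Sum>j\<in>UNIV. b j * (\<Sum>r\<in>UNIV. X r j * G r)) = (\<Sum>j\<in>UNIV. \<Sum>r\<in>UNIV. b j * X r j * G r)"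
    by (simp add: sum_distrib_left mult.assoc)
  also have "\<dots> = (\<Sum>r\<in>UNIV. \<Sum>j\<in>UNIV. b j * X r j * G r)" by (rule sum.swap)
  also have "\<dots> = (\<Sum>r\<in>UNIV. (\<Sum>j\<in>UNIV. b j * X r j) * G r)" by (simp add: sum_distrib_right)
  also have "\<dots> = 0" by (simp add: assms)
  finally show ?thesis .
qed

lemma swapeq:
  fixes b :: "'n::finite \<Rightarrow> real" and X :: "'m::finite \<Rightarrow> real"
  shows "(\<Sum>i\<in>UNIV. b i * (\<Sum>r\<in>UNIV. X r * Y r i)) = (\<Sum>r\<in>UNIV. X r * (\<Sum>i\<in>UNIV. b i * Y r i))"
proof -
  have "(\<Sum>i\<in>UNIV. b i * (\<Sum>r\<in>UNIV. X r * Y r i)) = (\<Sum>i\<in>UNIV. \<Sum>r\<in>UNIV. X r * (b i * Y r i))"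
    by (simp add: sum_distrib_left mult_ac)
  also have "\<dots> = (\<Sum>r\<in>UNIV. \<Sum>i\<in>UNIV. X r * (b i * Y r i))" by (rule sum.swap)
  also have "\<dots> = (\<Sum>r\<in>UNIV. X r * (\<Sum>i\<in>UNIV. b i * Y r i))" by (simp add: sum_distrib_left)
  finally show ?thesis .
qed

lemma triple_swap:
  fixes f :: "'n::finite \<Rightarrow> 'n \<Rightarrow> 'n \<Rightarrow> real"
  shows "(\<Sum>i\<in>UNIV. \<Sum>j\<in>UNIV. \<Sum>l\<in>UNIV. f i j l) = (\<Sum>l\<in>UNIV. \<Sum>j\<in>UNIV. \<Sum>i\<in>UNIV. f i j l)"
proof -
  have "(\<Sum>i\<in>UNIV. \<Sum>j\<in>UNIV. \<Sum>l\<in>UNIV. f i j l) = (\<Sum>i\<in>UNIV. \<Sum>l\<in>UNIV. \<Sum>j\<in>UNIV. f i j l)"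
    by (rule sum.cong[OF refl]) (rule sum.swap)
  also have "\<dots> = (\<Sum>l\<in>UNIV. \<Sum>i\<in>UNIV. \<Sum>j\<in>UNIV. f i j l)" by (rule sum.swap)
  also have "\<dots> = (\<Sum>l\<in>UNIV. \<Sum>j\<in>UNIV. \<Sum>i\<in>UNIV. f i j l)"
    by (rule sum.cong[OF refl]) (rule sum.swap)
  finally show ?thesis .
qed

lemma final_alg:
  fixes b P :: "'n::finite \<Rightarrow> real" and h :: "'n \<Rightarrow> 'n \<Rightarrow> real" and N :: real
  assumes N: "N > 0" and H: "(\<Sum>i\<in>UNIV. \<Sum>j\<in>UNIV. h i j * b i * b j) \<noteq> 0"
    and Q: "\<And>k. (\<Sum>i\<in>UNIV. \<Sum>j\<in>UNIV. b i * b j * ((h i j * P k + h j k * P i + h k i * P j) / N)) = 0"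
  shows "P k = 0"
proof -
  define HH where "HH = (\<Sum>i\<in>UNIV. \<Sum>j\<in>UNIV. h i j * b i * b j)"
  define \<beta> where "\<beta> = (\<Sum>i\<in>UNIV. b i * P i)"
  define c where "c k = (\<Sum>j\<in>UNIV. b j * h j k) + (\<Sum>i\<in>UNIV. b i * h k i)" for k
  have Q': "HH * P k + c k * \<beta> = 0" for k
  proof -
    have t: "b i * b j * ((h i j * P k + h j k * P i + h k i * P j) / N)
       = (h i j * b i * b j * P k + (b i * P i) * (b j * h j k) + (b i * h k i) * (b j * P j)) / N" for i j
      using N by (simp add: field_simps)
    have eq1: "(\<Sum>i\<in>UNIV. \<Sum>j\<in>UNIV. b i * b j * ((h i j * P k + h j k * P i + h k i * P j) / N))
      = ((\<Sum>i\<in>UNIV. \<Sum>j\<in>UNIV. h i j * b i * b j * P k)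
         + (\<Sum>i\<in>UNIV. \<Sum>j\<in>UNIV. (b i * P i) * (b j * h j k))
         + (\<Sum>i\<in>UNIV. \<Sum>j\<in>UNIV. (b i * h k i) * (b j * P j))) / N"
      unfolding t by (simp only: sum.distrib sum_divide_distrib add_divide_distrib)
    have eq2: "(\<Sum>i\<in>UNIV. \<Sum>j\<in>UNIV. h i j * b i * b j * P k) = HH * P k"
      unfolding HH_def by (simp add: sum_distrib_right)
    have eq3: "(\<Sum>i\<in>UNIV. \<Sum>j\<in>UNIV. (b i * P i) * (b j * h j k))
         + (\<Sum>i\<in>UNIV. \<Sum>j\<in>UNIV. (b i * h k i) * (b j * P j)) = c k * \<beta>"
      unfolding c_def \<beta>_def sum_product[symmetric] by (simp add: distrib_left mult.commute)
    have "(\<Sum>i\<in>UNIV. \<Sum>j\<in>UNIV. b i * b j * ((h i j * P k + h j k * P i + h k i * P j) / N))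
       = (HH * P k + ((\<Sum>i\<in>UNIV. \<Sum>j\<in>UNIV. (b i * P i) * (b j * h j k))
         + (\<Sum>i\<in>UNIV. \<Sum>j\<in>UNIV. (b i * h k i) * (b j * P j)))) / N"
      unfolding eq1 eq2 by (simp only: add.assoc)
    also have "\<dots> = (HH * P k + c k * \<beta>) / N" by (simp only: eq3)
    finally have "(HH * P k + c k * \<beta>) / N = 0" using Q[of k] by simp
    then show ?thesis using N by simp
  qed
  have bc: "(\<Sum>k\<in>UNIV. b k * c k) = 2 * HH"
  proof -
    have "(\<Sum>k\<in>UNIV. b k * c k) = (\<Sum>k\<in>UNIV. \<Sum>j\<in>UNIV. h j k * b j * b k) + (\<Sum>k\<in>UNIV. \<Sum>i\<in>UNIV. h k i * b k * b i)"
      unfolding c_def by (simp add: distrib_left sum.distrib sum_distrib_left mult_ac)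
    also have "(\<Sum>k\<in>UNIV. \<Sum>j\<in>UNIV. h j k * b j * b k) = HH"
      unfolding HH_def by (rule sum.swap)
    also have "(\<Sum>k\<in>UNIV. \<Sum>i\<in>UNIV. h k i * b k * b i) = HH"
      unfolding HH_def ..
    finally show ?thesis by simp
  qed
  have "(\<Sum>k\<in>UNIV. b k * (HH * P k + c k * \<beta>)) = HH * \<beta> + \<beta> * (\<Sum>k\<in>UNIV. b k * c k)"
    unfolding \<beta>_def by (simp add: distrib_left sum.distrib sum_distrib_left mult_ac)
  then have "3 * HH * \<beta> = 0" using Q' bc by simp
  then have "\<beta> = 0" using H unfolding HH_def by simp
  then have "HH * P k = 0" using Q'[of k] by simp
  then show ?thesis using H unfolding HH_def by simp
qed

context
  fixes U :: "(real^'n::finite) set" and F :: "'n fn" and B :: "real^'n \<Rightarrow> real^'n"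
  assumes fin: "finsler U F" and sc: "semi_concurrent U F B"
begin

lemma oD: "open (TU0 U)"
  using fin open_TU0 unfolding finsler_def by blast

lemma smF: "smooth_on (TU0 U) F"
  using fin unfolding finsler_def by blast

lemma smF2: "smooth_on (TU0 U) (Fsq F)"
proof -
  have "Fsq F = (\<lambda>z. F z * F z)" by (simp add: Fsq_def fun_eq_iff power2_eq_square)
  then show ?thesis using smooth_mult[OF oD smF smF] by simp
qed

lemma gt_eq: "gt F i j = (\<lambda>w. dirderiv (0, axis i 1) (dirderiv (0, axis j 1) (Fsq F)) w / 2)"
  by (simp add: fun_eq_iff gt_def dY_eq)

lemma sm_gt: "smooth_on (TU0 U) (gt F i j)"
  unfolding gt_eq by (rule smooth_half[OF oD smooth_dir[OF smooth_dir[OF smF2]]])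

lemma Ct_eq: "Ct F i j k = (\<lambda>w. dirderiv (0, axis k 1) (gt F i j) w / 2)"
  by (simp add: fun_eq_iff Ct_def dY_eq)

lemma sm_Ct: "smooth_on (TU0 U) (Ct F i j k)"
  unfolding Ct_eq by (rule smooth_half[OF oD smooth_dir[OF sm_gt]])

lemma gt_sym: "w \<in> TU0 U \<Longrightarrow> gt F i j w = gt F j i w"
  unfolding gt_eq using clairaut[OF oD smF2] by simp

lemma Ct_sym: "w \<in> TU0 U \<Longrightarrow> Ct F i j k w = Ct F j i k w"
  unfolding Ct_eq using dirderiv_cong[OF oD _ gt_sym] by simp

lemma sc0: "w \<in> TU0 U \<Longrightarrow> (\<Sum>h\<in>UNIV. B (fst w) $ h * Ct F h i j w) = 0"
  using sc unfolding semi_concurrent_def by blast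

lemma s2:
  assumes zD: "z \<in> TU0 U"
  shows "(\<Sum>h\<in>UNIV. B (fst z) $ h * dY r (Ct F h i j) z) = 0"
proof (rule zero_deriv)
  show "((\<lambda>t. \<Sum>h\<in>UNIV. B (fst z) $ h * Ct F h i j (z + t *\<^sub>R (0, axis r 1))) has_real_derivative
      (\<Sum>h\<in>UNIV. B (fst z) $ h * dY r (Ct F h i j) z)) (at 0)"
    by (intro DERIV_sum DERIV_cmult, unfold dY_eq, rule smooth_derivD[OF sm_Ct zD])
  show "open {t. z + t *\<^sub>R (0, axis r 1) \<in> TU0 U}" by (rule line_open[OF oD])
  show "0 \<in> {t. z + t *\<^sub>R (0, axis r 1) \<in> TU0 U}" using zD by simp
  fix t assume "t \<in> {t. z + t *\<^sub>R (0, axis r 1) \<in> TU0 U}"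
  then show "(\<Sum>h\<in>UNIV. B (fst z) $ h * Ct F h i j (z + t *\<^sub>R (0, axis r 1))) = 0"
    using sc0[of "z + t *\<^sub>R (0, axis r 1)"] by simp
qed

lemma s3:
  assumes zD: "z \<in> TU0 U"
  shows "(\<Sum>h\<in>UNIV. dirderiv (axis l 1) (\<lambda>x. B x $ h) (fst z) * Ct F h i j z
            + B (fst z) $ h * dX l (Ct F h i j) z) = 0"
proof (rule zero_deriv)
  have xU: "fst z \<in> U" using zD by (auto simp: TU0_def)
  have dB: "((\<lambda>t. B (fst z + t *\<^sub>R axis l 1) $ h) has_real_derivative dirderiv (axis l 1) (\<lambda>x. B x $ h) (fst z)) (at 0)" for h
  proof -
    have "smooth_on U (\<lambda>x. B x $ h)" using sc unfolding semi_concurrent_def by blast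
    from smooth_derivD[OF this xU] show ?thesis .
  qed
  have dC: "((\<lambda>t. Ct F h i j (z + t *\<^sub>R (axis l 1, 0))) has_real_derivative dX l (Ct F h i j) z) (at 0)" for h
    unfolding dX_eq by (rule smooth_derivD[OF sm_Ct zD])
  have "((\<lambda>t. \<Sum>h\<in>UNIV. B (fst z + t *\<^sub>R axis l 1) $ h * Ct F h i j (z + t *\<^sub>R (axis l 1, 0))) has_real_derivative
      (\<Sum>h\<in>UNIV. dirderiv (axis l 1) (\<lambda>x. B x $ h) (fst z) * Ct F h i j (z + 0 *\<^sub>R (axis l 1, 0))
        + dX l (Ct F h i j) z * B (fst z + 0 *\<^sub>R axis l 1) $ h)) (at 0)"
    by (intro DERIV_sum DERIV_mult dB dC)
  then show "((\<lambda>t. \<Sum>h\<in>UNIV. B (fst z + t *\<^sub>R axis l 1) $ h * Ct F h i j (z + t *\<^sub>R (axis l 1, 0))) has_real_derivative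
      (\<Sum>h\<in>UNIV. dirderiv (axis l 1) (\<lambda>x. B x $ h) (fst z) * Ct F h i j z
            + B (fst z) $ h * dX l (Ct F h i j) z)) (at 0)"
    by (simp add: mult.commute)
  show "open {t. z + t *\<^sub>R (axis l 1, 0) \<in> TU0 U}" by (rule line_open[OF oD])
  show "0 \<in> {t. z + t *\<^sub>R (axis l 1, 0) \<in> TU0 U}" using zD by simp
  fix t assume "t \<in> {t. z + t *\<^sub>R (axis l 1, 0) \<in> TU0 U}"
  then show "(\<Sum>h\<in>UNIV. B (fst z + t *\<^sub>R axis l 1) $ h * Ct F h i j (z + t *\<^sub>R (axis l 1, 0))) = 0"
    using sc0[of "z + t *\<^sub>R (axis l 1, 0)"] by simp
qed

lemma E1:
  assumes wD: "w \<in> TU0 U"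
  shows "dirderiv (0, snd w) (Fsq F) w = 2 * Fsq F w"
proof -
  obtain x y where w: "w = (x, y)" by force
  have xU: "x \<in> U" and y0: "y \<noteq> 0" using wD w by (auto simp: TU0_def)
  have hom: "Fsq F (w + t *\<^sub>R (0, y)) = (1 + t)^2 * Fsq F w" if "t \<in> {-1<..}" for t
  proof -
    have "w + t *\<^sub>R (0, y) = (x, (1 + t) *\<^sub>R y)" by (simp add: w algebra_simps)
    moreover have "F (x, (1 + t) *\<^sub>R y) = (1 + t) * F (x, y)"
      using fin xU y0 that unfolding finsler_def by auto
    ultimately show ?thesis by (simp add: Fsq_def w power_mult_distrib)
  qed
  have d: "((\<lambda>t. (1 + t)^2 * Fsq F w) has_real_derivative 2 * Fsq F w) (at 0)"
    by (auto intro!: derivative_eq_intros)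
  have "((\<lambda>t. Fsq F (w + t *\<^sub>R (0, y))) has_real_derivative 2 * Fsq F w) (at 0)"
  proof (rule has_field_derivative_transform_within_open[OF d, of "{-1<..}"])
    fix t :: real assume "t \<in> {-1<..}"
    from hom[OF this] show "(1 + t)^2 * Fsq F w = Fsq F (w + t *\<^sub>R (0, y))" by simp
  qed auto
  then show ?thesis unfolding dirderiv_def w by (simp add: DERIV_imp_deriv)
qed

lemma E2:
  assumes wD: "w \<in> TU0 U"
  shows "(\<Sum>j\<in>UNIV. snd w $ j * dY j (Fsq F) w) = 2 * Fsq F w"
proof -
  have pe: "(0, snd w) = (\<Sum>j\<in>UNIV. snd w $ j *\<^sub>R ((0::real^'n), axis j (1::real)))"
    by (rule pair_expansion)
  have "dirderiv (0, snd w) (Fsq F) w = (\<Sum>j\<in>UNIV. snd w $ j * dirderiv (0, axis j 1) (Fsq F) w)"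
    unfolding pe by (rule dirderiv_sum[OF oD smF2 wD]) simp
  then show ?thesis using E1[OF wD] by (simp add: dY_eq)
qed

lemma axis_sum: "(\<Sum>j\<in>UNIV. axis i (1::real) $ j * X j) = X i"
proof -
  have "(\<Sum>j\<in>UNIV. axis i (1::real) $ j * X j) = (\<Sum>j\<in>UNIV. if j = i then X j else 0)"
    by (rule sum.cong) (auto simp: axis_def)
  also have "\<dots> = X i" by simp
  finally show ?thesis .
qed

lemma E3:
  assumes zD: "z \<in> TU0 U"
  shows "(\<Sum>j\<in>UNIV. snd z $ j * dY i (dY j (Fsq F)) z) = dY i (Fsq F) z"
proof -
  let ?v = "(0::real^'n, axis i (1::real))"
  define G where "G w = (\<Sum>j\<in>UNIV. snd w $ j * dY j (Fsq F) w)" for w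
  have dj: "((\<lambda>t. dY j (Fsq F) (z + t *\<^sub>R ?v)) has_real_derivative dY i (dY j (Fsq F)) z) (at 0)" for j
    unfolding dY_eq[of i] by (rule smooth_derivD[OF _ zD]) (unfold dY_eq, rule smooth_dir[OF smF2])
  have dc: "((\<lambda>t. snd z $ j + t * axis i 1 $ j) has_real_derivative axis i 1 $ j) (at 0)" for j
    by (auto intro!: derivative_eq_intros)
  have "((\<lambda>t. \<Sum>j\<in>UNIV. (snd z $ j + t * axis i 1 $ j) * dY j (Fsq F) (z + t *\<^sub>R ?v)) has_real_derivative
     (\<Sum>j\<in>UNIV. axis i 1 $ j * dY j (Fsq F) (z + 0 *\<^sub>R ?v) + dY i (dY j (Fsq F)) z * (snd z $ j + 0 * axis i 1 $ j))) (at 0)"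
    by (intro DERIV_sum DERIV_mult dc dj)
  moreover have "(\<lambda>t. G (z + t *\<^sub>R ?v)) = (\<lambda>t. \<Sum>j\<in>UNIV. (snd z $ j + t * axis i 1 $ j) * dY j (Fsq F) (z + t *\<^sub>R ?v))"
    by (simp add: G_def fun_eq_iff)
  ultimately have d1: "((\<lambda>t. G (z + t *\<^sub>R ?v)) has_real_derivative
     (\<Sum>j\<in>UNIV. axis i 1 $ j * dY j (Fsq F) z + dY i (dY j (Fsq F)) z * snd z $ j)) (at 0)"
    by simp
  have d2: "((\<lambda>t. 2 * Fsq F (z + t *\<^sub>R ?v)) has_real_derivative 2 * dY i (Fsq F) z) (at 0)"
    unfolding dY_eq by (intro DERIV_cmult smooth_derivD[OF smF2 zD])
  have "(\<Sum>j\<in>UNIV. axis i 1 $ j * dY j (Fsq F) z + dY i (dY j (Fsq F)) z * snd z $ j) = 2 * dY i (Fsq F) z"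
    by (rule eq_deriv[OF d1 d2 oD zD]) (simp add: G_def E2)
  then have "(\<Sum>j\<in>UNIV. axis i 1 $ j * dY j (Fsq F) z) + (\<Sum>j\<in>UNIV. dY i (dY j (Fsq F)) z * snd z $ j) = 2 * dY i (Fsq F) z"
    by (simp only: sum.distrib)
  moreover have "(\<Sum>j\<in>UNIV. axis i 1 $ j * dY j (Fsq F) z) = dY i (Fsq F) z" by (rule axis_sum)
  moreover have "(\<Sum>j\<in>UNIV. dY i (dY j (Fsq F)) z * snd z $ j) = (\<Sum>j\<in>UNIV. snd z $ j * dY i (dY j (Fsq F)) z)"
    by (simp add: mult.commute)
  ultimately show ?thesis by linarith
qed

lemma E4:
  assumes zD: "z \<in> TU0 U"
  shows "dY i (Fsq F) z = 2 * F z * dY i F z"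
proof -
  let ?v = "(0::real^'n, axis i (1::real))"
  have dF: "((\<lambda>t. F (z + t *\<^sub>R ?v)) has_real_derivative dY i F z) (at 0)"
    unfolding dY_eq by (rule smooth_derivD[OF smF zD])
  have "((\<lambda>t. F (z + t *\<^sub>R ?v) * F (z + t *\<^sub>R ?v)) has_real_derivative
        dY i F z * F (z + 0 *\<^sub>R ?v) + dY i F z * F (z + 0 *\<^sub>R ?v)) (at 0)"
    by (rule DERIV_mult[OF dF dF])
  then have a: "((\<lambda>t. Fsq F (z + t *\<^sub>R ?v)) has_real_derivative dY i F z * F z + dY i F z * F z) (at 0)"
    by (simp add: Fsq_def power2_eq_square)
  have b: "((\<lambda>t. Fsq F (z + t *\<^sub>R ?v)) has_real_derivative dY i (Fsq F) z) (at 0)"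
    unfolding dY_eq by (rule smooth_derivD[OF smF2 zD])
  show ?thesis using DERIV_unique[OF b a] by simp
qed

lemma E5:
  assumes zD: "z \<in> TU0 U"
  shows "(\<Sum>j\<in>UNIV. gt F i j z * snd z $ j) = F z * lt F i z"
proof -
  have "(\<Sum>j\<in>UNIV. gt F i j z * snd z $ j) = (\<Sum>j\<in>UNIV. snd z $ j * dY i (dY j (Fsq F)) z) / 2"
    by (simp add: gt_def sum_divide_distrib mult.commute)
  also have "\<dots> = F z * lt F i z" using E3[OF zD] E4[OF zD] by (simp add: lt_def)
  finally show ?thesis .
qed

lemma ChdI:
  assumes zD: "z \<in> TU0 U"
  shows "(\<Sum>i\<in>UNIV. B (fst z) $ i * Chd F i j k l z)
    = - (\<Sum>i\<in>UNIV. dirderiv (axis l 1) (\<lambda>x. B x $ i) (fst z) * Ct F i j k z)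
      - (\<Sum>r\<in>UNIV. Ct F r j k z * (\<Sum>i\<in>UNIV. B (fst z) $ i * cartanF F r i l z))"
proof -
  let ?b = "\<lambda>i. B (fst z) $ i"
  let ?a = "\<lambda>i. dirderiv (axis l 1) (\<lambda>x. B x $ i) (fst z)"
  have e: "Chd F i j k l z = dX l (Ct F i j k) z - (\<Sum>r\<in>UNIV. dY r (Ct F i j k) z * Nt F r l z)
     - (\<Sum>r\<in>UNIV. Ct F r j k z * cartanF F r i l z) - (\<Sum>r\<in>UNIV. Ct F i r k z * cartanF F r j l z)
     - (\<Sum>r\<in>UNIV. Ct F i j r z * cartanF F r k l z)" for i
    by (simp add: Chd_def delta_def sum.distrib mult.commute)
  have "(\<Sum>i\<in>UNIV. ?b i * Chd F i j k l z) =
      (\<Sum>i\<in>UNIV. ?b i * dX l (Ct F i j k) z) - (\<Sum>i\<in>UNIV. ?b i * (\<Sum>r\<in>UNIV. dY r (Ct F i j k) z * Nt F r l z))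
     - (\<Sum>i\<in>UNIV. ?b i * (\<Sum>r\<in>UNIV. Ct F r j k z * cartanF F r i l z))
     - (\<Sum>i\<in>UNIV. ?b i * (\<Sum>r\<in>UNIV. Ct F i r k z * cartanF F r j l z))
     - (\<Sum>i\<in>UNIV. ?b i * (\<Sum>r\<in>UNIV. Ct F i j r z * cartanF F r k l z))"
    unfolding e by (simp add: right_diff_distrib sum_subtractf)
  moreover have "(\<Sum>i\<in>UNIV. ?b i * dX l (Ct F i j k) z) = - (\<Sum>i\<in>UNIV. ?a i * Ct F i j k z)"
    using s3[OF zD, of l j k] by (simp add: sum.distrib add_eq_0_iff)
  moreover have "(\<Sum>i\<in>UNIV. ?b i * (\<Sum>r\<in>UNIV. dY r (Ct F i j k) z * Nt F r l z)) = 0"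
    by (rule swap0) (rule s2[OF zD])
  moreover have "(\<Sum>i\<in>UNIV. ?b i * (\<Sum>r\<in>UNIV. Ct F r j k z * cartanF F r i l z))
      = (\<Sum>r\<in>UNIV. Ct F r j k z * (\<Sum>i\<in>UNIV. ?b i * cartanF F r i l z))"
    by (rule swapeq)
  moreover have "(\<Sum>i\<in>UNIV. ?b i * (\<Sum>r\<in>UNIV. Ct F i r k z * cartanF F r j l z)) = 0"
    by (rule swap0) (rule sc0[OF zD])
  moreover have "(\<Sum>i\<in>UNIV. ?b i * (\<Sum>r\<in>UNIV. Ct F i j r z * cartanF F r k l z)) = 0"
    by (rule swap0) (rule sc0[OF zD])
  ultimately show ?thesis by simp
qed

lemma sc0':
  assumes zD: "z \<in> TU0 U"
  shows "(\<Sum>j\<in>UNIV. B (fst z) $ j * Ct F i j k z) = 0"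
  using sc0[OF zD, of i k] Ct_sym[OF zD] by simp

lemma Zl:
  assumes zD: "z \<in> TU0 U"
  shows "(\<Sum>j\<in>UNIV. B (fst z) $ j * (\<Sum>i\<in>UNIV. B (fst z) $ i * Chd F i j k l z)) = 0"
proof -
  let ?b = "\<lambda>i. B (fst z) $ i"
  let ?a = "\<lambda>i. dirderiv (axis l 1) (\<lambda>x. B x $ i) (fst z)"
  let ?be = "\<lambda>r. (\<Sum>i\<in>UNIV. ?b i * cartanF F r i l z)"
  have "(\<Sum>j\<in>UNIV. ?b j * (\<Sum>i\<in>UNIV. ?b i * Chd F i j k l z))
     = - (\<Sum>j\<in>UNIV. ?b j * (\<Sum>i\<in>UNIV. Ct F i j k z * ?a i)) - (\<Sum>j\<in>UNIV. ?b j * (\<Sum>r\<in>UNIV. Ct F r j k z * ?be r))"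
    unfolding ChdI[OF zD] by (simp add: right_diff_distrib sum_subtractf sum_negf mult.commute)
  also have "(\<Sum>j\<in>UNIV. ?b j * (\<Sum>i\<in>UNIV. Ct F i j k z * ?a i)) = 0"
    by (rule swap0) (rule sc0'[OF zD])
  also have "(\<Sum>j\<in>UNIV. ?b j * (\<Sum>r\<in>UNIV. Ct F r j k z * ?be r)) = 0"
    by (rule swap0) (rule sc0'[OF zD])
  finally show ?thesis by simp
qed

lemma Qk:
  assumes zD: "z \<in> TU0 U"
  shows "(\<Sum>i\<in>UNIV. \<Sum>j\<in>UNIV. B (fst z) $ i * B (fst z) $ j * Pt F i j k z) = 0"
proof -
  let ?b = "\<lambda>i. B (fst z) $ i"
  have "(\<Sum>i\<in>UNIV. \<Sum>j\<in>UNIV. ?b i * ?b j * Pt F i j k z)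
     = (\<Sum>i\<in>UNIV. \<Sum>j\<in>UNIV. \<Sum>l\<in>UNIV. snd z $ l * (?b j * (?b i * Chd F i j k l z)))"
    by (simp add: Pt_def sum_distrib_left mult_ac)
  also have "\<dots> = (\<Sum>l\<in>UNIV. \<Sum>j\<in>UNIV. \<Sum>i\<in>UNIV. snd z $ l * (?b j * (?b i * Chd F i j k l z)))"
    by (rule triple_swap)
  also have "\<dots> = (\<Sum>l\<in>UNIV. snd z $ l * (\<Sum>j\<in>UNIV. ?b j * (\<Sum>i\<in>UNIV. ?b i * Chd F i j k l z)))"
    by (simp add: sum_distrib_left)
  also have "\<dots> = 0" by (simp add: Zl[OF zD])
  finally show ?thesis .
qed

lemma hBB:
  assumes zD: "z \<in> TU0 U"
    and ne: "Bsq F B z * (F z)\<^sup>2 - (B0 F B z)\<^sup>2 \<noteq> 0"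
  shows "(\<Sum>i\<in>UNIV. \<Sum>j\<in>UNIV. ht F i j z * B (fst z) $ i * B (fst z) $ j) \<noteq> 0"
proof
  let ?b = "\<lambda>i. B (fst z) $ i"
  define L where "L = (\<Sum>i\<in>UNIV. lt F i z * ?b i)"
  assume h0: "(\<Sum>i\<in>UNIV. \<Sum>j\<in>UNIV. ht F i j z * ?b i * ?b j) = 0"
  have "B0 F B z = (\<Sum>i\<in>UNIV. ?b i * (\<Sum>j\<in>UNIV. gt F i j z * snd z $ j))"
    unfolding B0_def by (simp add: sum_distrib_left mult_ac)
  also have "\<dots> = F z * L" unfolding L_def E5[OF zD] by (simp add: sum_distrib_left mult_ac)
  finally have b0: "B0 F B z = F z * L" .
  have "(\<Sum>i\<in>UNIV. \<Sum>j\<in>UNIV. ht F i j z * ?b i * ?b j)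
       = Bsq F B z - (\<Sum>i\<in>UNIV. \<Sum>j\<in>UNIV. (lt F i z * ?b i) * (lt F j z * ?b j))"
  proof -
    have "ht F i j z * ?b i * ?b j = gt F i j z * ?b i * ?b j - (lt F i z * ?b i) * (lt F j z * ?b j)" for i j
      by (simp add: ht_def algebra_simps)
    then show ?thesis unfolding Bsq_def by (simp only: sum_subtractf)
  qed
  also have "\<dots> = Bsq F B z - L * L" unfolding L_def sum_product ..
  finally have "Bsq F B z = L * L" using h0 by simp
  then have "Bsq F B z * (F z)\<^sup>2 - (B0 F B z)\<^sup>2 = 0" using b0 by (simp add: power2_eq_square)
  then show False using ne by simp
qed

end
theorem mainTheorem5:
  fixes U :: "(real^'n::finite) set" and F :: "'n fn" and B :: "real^'n \<Rightarrow> real^'n"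
  assumes "finsler U F"
    and "P_reducible U F"
    and "semi_concurrent U F B"
    and "z \<in> TU0 U"
    and "Bsq F B z * (F z)\<^sup>2 - (B0 F B z)\<^sup>2 \<noteq> 0"
  shows "(\<forall>k. Pv F k z = 0) \<and> (\<forall>i j k. Pt F i j k z = 0)"
proof -
  let ?N = "real CARD('n) + 1"
  have red: "Pt F i j k z = (ht F i j z * Pv F k z + ht F j k z * Pv F i z + ht F k i z * Pv F j z) / ?N" for i j k
    using assms(2,4) unfolding P_reducible_def by blast
  have H: "(\<Sum>i\<in>UNIV. \<Sum>j\<in>UNIV. ht F i j z * B (fst z) $ i * B (fst z) $ j) \<noteq> 0"
    by (rule hBB[OF assms(1,3,4,5)])
  have Q: "(\<Sum>i\<in>UNIV. \<Sum>j\<in>UNIV. B (fst z) $ i * B (fst z) $ j *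
      ((ht F i j z * Pv F k z + ht F j k z * Pv F i z + ht F k i z * Pv F j z) / ?N)) = 0" for k
    using Qk[OF assms(1,3,4), of k] unfolding red .
  have P0: "Pv F k z = 0" for k
    by (rule final_alg[of ?N "\<lambda>i j. ht F i j z" "\<lambda>i. B (fst z) $ i" "\<lambda>k. Pv F k z", OF _ H Q]) simp
  show ?thesis using P0 red by simp
qed


end
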